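(* Let $G=(X,E,w)$ be a connected weighted graph with total weight $W$, $M\subseteq X$ nonempty, $\sigma$ a probability distribution with $S=\mathrm{supp}(\sigma)\subseteq X\setminus M$, and $C>0$. Let $G'$ be the weighted graph on $X'=\{0,1\}\times X$ with weights $w'_{(0,u),(0,v)}=w_{u,v}$ for all $u,v\in X$, $w'_{(0,u),(1,u)}=w'_{(1,u),(0,u)}=\sigma_uW/C$ for all $u\in X$, and all other weights $0$; let $W'$, $\pi'$, $R'$, $C'$ denote the corresponding quantities on $G'$, $S'=\{1\}\times S$, $M'=\{0\}\times M$. Then $\pi'(S')=\frac{1}{C+2}$. Moreover, if $\rho$ is a probability distribution on $S$ with $\sum_{u\in S}\rho_u^2/\sigma_u=1/p$, and $\rho'$ is the distribution on $X'$ with $\rho'_{(1,u)}=\rho_u$ (zero elsewhere), then \[ C'_{\rho',M'}=\Big(\frac{C_{\rho,M}}{C}+\frac1p\Big)(C+2), \qquad\text{and hence}\qquad \frac{1}{C'_{S',M'}\,\pi'(S')}\ge\frac12\min\Big\{p,\frac{C}{C_{\rho,M}}\Big\}. \]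
   Context: For a weighted graph: $w_u=\sum_vw_{u,v}$, $W=\sum_{u,v}w_{u,v}$ (sum over ordered pairs), $\pi_u=w_u/W$, $\pi(A)=\sum_{u\in A}\pi_u$. A unit flow from a distribution $\sigma$ supported outside $M$ to $M$ is $p:X\times X\to\mathbb R$ with $p_{u,v}=0$ if $w_{u,v}=0$, $p_{u,v}=-p_{v,u}$, $\sum_vp_{u,v}=\sigma_u$ for $u\notin M$, $\sum_{u\in M}\sum_{v\notin M}p_{u,v}=-1$. $R_{\sigma,M}=\min_p\sum_{\{u,v\}}p_{u,v}^2/w_{u,v}$ (unordered pairs), $C_{\sigma,M}=WR_{\sigma,M}$, $R_{S,M}=\min_{\sigma:\mathrm{supp}\sigma\subseteq S}R_{\sigma,M}$, $C_{S,M}=WR_{S,M}$. *)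

theory Defs
  imports Main "HOL-Library.Transitive_Closure_Table" Complex_Main
begin

definition weighted_graph :: "'a set \<Rightarrow> ('a \<Rightarrow> 'a \<Rightarrow> real) \<Rightarrow> bool" where
  "weighted_graph X w \<longleftrightarrow> finite X \<and>
     (\<forall>u\<in>X. \<forall>v\<in>X. 0 \<le> w u v \<and> w u v = w v u)"

definition wg_connected :: "'a set \<Rightarrow> ('a \<Rightarrow> 'a \<Rightarrow> real) \<Rightarrow> bool" where
  "wg_connected X w \<longleftrightarrow>
     (\<forall>u\<in>X. \<forall>v\<in>X. (\<lambda>a b. a \<in> X \<and> b \<in> X \<and> w a b > 0)\<^sup>*\<^sup>* u v)"

definition vdeg :: "'a set \<Rightarrow> ('a \<Rightarrow> 'a \<Rightarrow> real) \<Rightarrow> 'a \<Rightarrow> real" where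
  "vdeg X w u = (\<Sum>v\<in>X. w u v)"

definition total_weight :: "'a set \<Rightarrow> ('a \<Rightarrow> 'a \<Rightarrow> real) \<Rightarrow> real" where
  "total_weight X w = (\<Sum>u\<in>X. \<Sum>v\<in>X. w u v)"

definition stat_dist :: "'a set \<Rightarrow> ('a \<Rightarrow> 'a \<Rightarrow> real) \<Rightarrow> 'a \<Rightarrow> real" where
  "stat_dist X w u = vdeg X w u / total_weight X w"

definition stat_meas :: "'a set \<Rightarrow> ('a \<Rightarrow> 'a \<Rightarrow> real) \<Rightarrow> 'a set \<Rightarrow> real" where
  "stat_meas X w A = (\<Sum>u\<in>A. stat_dist X w u)"

definition prob_dist :: "'a set \<Rightarrow> ('a \<Rightarrow> real) \<Rightarrow> bool" where
  "prob_dist X \<sigma> \<longleftrightarrow> (\<forall>u\<in>X. 0 \<le> \<sigma> u) \<and> (\<forall>u. u \<notin> X \<longrightarrow> \<sigma> u = 0) \<and> sum \<sigma> X = 1"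

definition supp :: "'a set \<Rightarrow> ('a \<Rightarrow> real) \<Rightarrow> 'a set" where
  "supp X \<sigma> = {u\<in>X. \<sigma> u \<noteq> 0}"

definition unit_flow :: "'a set \<Rightarrow> ('a \<Rightarrow> 'a \<Rightarrow> real) \<Rightarrow> ('a \<Rightarrow> real) \<Rightarrow> 'a set
     \<Rightarrow> ('a \<Rightarrow> 'a \<Rightarrow> real) \<Rightarrow> bool" where
  "unit_flow X w \<sigma> M p \<longleftrightarrow>
     (\<forall>u\<in>X. \<forall>v\<in>X. w u v = 0 \<longrightarrow> p u v = 0) \<and>
     (\<forall>u\<in>X. \<forall>v\<in>X. p u v = - p v u) \<and>
     (\<forall>u\<in>X - M. (\<Sum>v\<in>X. p u v) = \<sigma> u) \<and>
     (\<Sum>u\<in>M. \<Sum>v\<in>X - M. p u v) = -1"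

text \<open>Energy: sum over unordered pairs {u,v} of p_{uv}^2/w_{uv}. By antisymmetry
  p_{uu} = 0, so this equals half the sum over ordered pairs (terms with w = 0
  vanish since then p = 0, and x/0 = 0 in Isabelle).\<close>
definition flow_energy :: "'a set \<Rightarrow> ('a \<Rightarrow> 'a \<Rightarrow> real) \<Rightarrow> ('a \<Rightarrow> 'a \<Rightarrow> real) \<Rightarrow> real" where
  "flow_energy X w p = (\<Sum>u\<in>X. \<Sum>v\<in>X. (p u v)\<^sup>2 / w u v) / 2"

definition eff_res :: "'a set \<Rightarrow> ('a \<Rightarrow> 'a \<Rightarrow> real) \<Rightarrow> ('a \<Rightarrow> real) \<Rightarrow> 'a set \<Rightarrow> real" where
  "eff_res X w \<sigma> M = Inf {flow_energy X w p | p. unit_flow X w \<sigma> M p}"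

definition commute_time :: "'a set \<Rightarrow> ('a \<Rightarrow> 'a \<Rightarrow> real) \<Rightarrow> ('a \<Rightarrow> real) \<Rightarrow> 'a set \<Rightarrow> real" where
  "commute_time X w \<sigma> M = total_weight X w * eff_res X w \<sigma> M"

definition eff_res_set :: "'a set \<Rightarrow> ('a \<Rightarrow> 'a \<Rightarrow> real) \<Rightarrow> 'a set \<Rightarrow> 'a set \<Rightarrow> real" where
  "eff_res_set X w S M = Inf {eff_res X w \<sigma> M | \<sigma>. prob_dist X \<sigma> \<and> supp X \<sigma> \<subseteq> S}"

definition commute_time_set :: "'a set \<Rightarrow> ('a \<Rightarrow> 'a \<Rightarrow> real) \<Rightarrow> 'a set \<Rightarrow> 'a set \<Rightarrow> real" where
  "commute_time_set X w S M = total_weight X w * eff_res_set X w S M"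

definition lift_vertices :: "'a set \<Rightarrow> (nat \<times> 'a) set" where
  "lift_vertices X = {0::nat, 1} \<times> X"

definition lift_weight :: "'a set \<Rightarrow> ('a \<Rightarrow> 'a \<Rightarrow> real) \<Rightarrow> ('a \<Rightarrow> real) \<Rightarrow> real
     \<Rightarrow> (nat \<times> 'a) \<Rightarrow> (nat \<times> 'a) \<Rightarrow> real" where
  "lift_weight X w \<sigma> C x y =
     (case (x, y) of ((i, u), (j, v)) \<Rightarrow>
        if i = 0 \<and> j = 0 then w u v
        else if u = v \<and> ((i = 0 \<and> j = 1) \<or> (i = 1 \<and> j = 0))
          then \<sigma> u * total_weight X w / C
        else 0)"

definition lift_dist :: "('a \<Rightarrow> real) \<Rightarrow> (nat \<times> 'a) \<Rightarrow> real" where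
  "lift_dist \<rho> x = (if fst x = 1 then \<rho> (snd x) else 0)"

end

theory Submission
  imports Defs
begin

lemma sum_single:
  assumes "finite A" "a \<in> A" "\<And>x. x \<in> A \<Longrightarrow> x \<noteq> a \<Longrightarrow> f x = 0"
  shows "(\<Sum>x\<in>A. f x) = f a"
proof -
  have "(\<Sum>x\<in>A. f x) = f a + (\<Sum>x\<in>A - {a}. f x)"
    using assms by (simp add: sum.remove)
  also have "(\<Sum>x\<in>A - {a}. f x) = 0" using assms by (intro sum.neutral) auto
  finally show ?thesis by simp
qed

lemma sum_lift:
  assumes "finite X"
  shows "(\<Sum>x\<in>lift_vertices X. f x) = (\<Sum>u\<in>X. f (0,u)) + (\<Sum>u\<in>X. f (1,u))"
proof -
  have "(\<Sum>x\<in>lift_vertices X. f x) = (\<Sum>i\<in>{0::nat,1}. \<Sum>u\<in>X. f (i,u))"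
    unfolding lift_vertices_def by (simp add: sum.cartesian_product)
  then show ?thesis by simp
qed

lemma sum_lift_minus:
  assumes "finite X" "M \<subseteq> X"
  shows "(\<Sum>x\<in>lift_vertices X - {0}\<times>M. f x) = (\<Sum>u\<in>X-M. f (0,u)) + (\<Sum>u\<in>X. f (1,u))"
proof -
  have e: "lift_vertices X - {0}\<times>M = Pair 0 ` (X - M) \<union> Pair 1 ` X"
    unfolding lift_vertices_def by auto
  have "(\<Sum>x\<in>Pair 0 ` (X - M) \<union> Pair 1 ` X. f x) = (\<Sum>x\<in>Pair 0 ` (X - M). f x) + (\<Sum>x\<in>Pair (1::nat) ` X. f x)"
    using assms by (intro sum.union_disjoint) auto
  also have "(\<Sum>x\<in>Pair 0 ` (X - M). f x) = (\<Sum>u\<in>X-M. f (0,u))"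
    by (subst sum.reindex) (auto simp: inj_on_def)
  also have "(\<Sum>x\<in>Pair 1 ` X. f x) = (\<Sum>u\<in>X. f (1,u))"
    by (subst sum.reindex) (auto simp: inj_on_def)
  finally show ?thesis unfolding e .
qed

lemma sum_one_times:
  "(\<Sum>x\<in>{1::nat}\<times>S. f x) = (\<Sum>u\<in>S. f (1,u))"
proof -
  have "{1::nat}\<times>S = Pair 1 ` S" by auto
  then show ?thesis by (simp add: sum.reindex inj_on_def)
qed


lemma antisym_sum_zero:
  fixes p :: "'a \<Rightarrow> 'a \<Rightarrow> real"
  assumes "\<forall>u\<in>A. \<forall>v\<in>A. p u v = - p v u"
  shows "(\<Sum>u\<in>A. \<Sum>v\<in>A. p u v) = 0"
proof -
  have "(\<Sum>u\<in>A. \<Sum>v\<in>A. p u v) = (\<Sum>v\<in>A. \<Sum>u\<in>A. p u v)" by (rule sum.swap)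
  also have "\<dots> = (\<Sum>v\<in>A. \<Sum>u\<in>A. - p v u)" 
    apply (rule sum.cong[OF refl])
    apply (rule sum.cong[OF refl])
    using assms by blast
  also have "\<dots> = - (\<Sum>v\<in>A. \<Sum>u\<in>A. p v u)" by (simp add: sum_negf)
  finally show ?thesis by linarith
qed

definition flowok :: "'a set \<Rightarrow> ('a \<Rightarrow> 'a \<Rightarrow> real) \<Rightarrow> ('a \<Rightarrow> 'a \<Rightarrow> real) \<Rightarrow> bool" where
  "flowok X w f \<longleftrightarrow> (\<forall>u\<in>X. \<forall>v\<in>X. w u v = 0 \<longrightarrow> f u v = 0) \<and> (\<forall>u\<in>X. \<forall>v\<in>X. f u v = - f v u)"

lemma path_flow:
  assumes wg: "weighted_graph X w"
    and path: "(\<lambda>a b. a \<in> X \<and> b \<in> X \<and> w a b > 0)\<^sup>*\<^sup>* a b"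
  shows "\<exists>f. flowok X w f \<and> (\<forall>x\<in>X. (\<Sum>y\<in>X. f x y) = (if x = a then 1 else 0) - (if x = b then 1 else 0))"
  using path
proof (induction rule: rtranclp_induct)
  case base
  show ?case by (intro exI[of _ "\<lambda>_ _. 0"]) (simp add: flowok_def)
next
  case (step b c)
  then obtain f where f: "flowok X w f"
    "\<forall>x\<in>X. (\<Sum>y\<in>X. f x y) = (if x = a then 1 else 0) - (if x = b then 1 else 0)" by blast
  from step have bc: "b \<in> X" "c \<in> X" "w b c > 0" by auto
  have fin: "finite X" using wg by (simp add: weighted_graph_def)
  have wcb: "w c b > 0" using bc wg by (simp add: weighted_graph_def)
  define g where "g x y = (if x = b \<and> y = c then 1 else 0) - (if x = c \<and> y = b then 1 else (0::real))" for x y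
  have gok: "flowok X w g" unfolding flowok_def
  proof (intro conjI ballI impI)
    fix u v assume uv: "u \<in> X" "v \<in> X" "w u v = 0"
    have h1: "\<not> (u = b \<and> v = c)" using uv(3) bc(3) by auto
    have h2: "\<not> (u = c \<and> v = b)" using uv(3) wcb by auto
    show "g u v = 0" unfolding g_def by (simp only: if_not_P[OF h1] if_not_P[OF h2] diff_self)
  next
    fix u v assume "u \<in> X" "v \<in> X"
    show "g u v = - g v u" unfolding g_def by (cases "u = b"; cases "v = c"; cases "u = c"; cases "v = b") simp_all
  qed
  have gdiv: "(\<Sum>y\<in>X. g x y) = (if x = b then 1 else 0) - (if x = c then 1 else 0)" for x
  proof -
    have 1: "(\<Sum>y\<in>X. if x = b \<and> y = c then 1 else (0::real)) = (if x = b then 1 else 0)"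
      using bc fin by (cases "x = b") (simp_all add: sum.delta)
    have 2: "(\<Sum>y\<in>X. if x = c \<and> y = b then 1 else (0::real)) = (if x = c then 1 else 0)"
      using bc fin by (cases "x = c") (simp_all add: sum.delta)
    show ?thesis unfolding g_def sum_subtractf 1 2 ..
  qed
  show ?case
  proof (intro exI[of _ "\<lambda>x y. f x y + g x y"] conjI ballI)
    show "flowok X w (\<lambda>x y. f x y + g x y)" using f(1) gok unfolding flowok_def by (metis add.commute add_0 minus_add_distrib)
    fix x assume x: "x \<in> X"
    show "(\<Sum>y\<in>X. f x y + g x y) = (if x = a then 1 else 0) - (if x = c then 1 else 0)"
    proof -
      have "(\<Sum>y\<in>X. f x y + g x y) = (\<Sum>y\<in>X. f x y) + (\<Sum>y\<in>X. g x y)" by (rule sum.distrib)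
      also have "\<dots> = ((if x = a then 1 else 0) - (if x = b then 1 else 0)) + ((if x = b then 1 else 0) - (if x = c then 1 else 0))"
        using f(2) x gdiv[of x] by simp
      also have "\<dots> = (if x = a then 1 else 0) - (if x = c then 1 else 0)" by simp
      finally show ?thesis .
    qed
  qed
qed



lemma flow_exists:
  assumes wg: "weighted_graph X w" and conn: "wg_connected X w"
    and MX: "M \<subseteq> X" and m: "m \<in> M"
    and r: "prob_dist X r" and rs: "supp X r \<subseteq> X - M"
  shows "\<exists>p. unit_flow X w r M p"
proof -
  have fin: "finite X" using wg by (simp add: weighted_graph_def)
  have mX: "m \<in> X" using m MX by auto
  have "\<forall>u\<in>X. \<exists>f. flowok X w f \<and> (\<forall>x\<in>X. (\<Sum>y\<in>X. f x y) = (if x = u then 1 else 0) - (if x = m then 1 else 0))"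
  proof
    fix u assume u: "u \<in> X"
    have "(\<lambda>a b. a \<in> X \<and> b \<in> X \<and> w a b > 0)\<^sup>*\<^sup>* u m" using conn u mX by (simp add: wg_connected_def)
    then show "\<exists>f. flowok X w f \<and> (\<forall>x\<in>X. (\<Sum>y\<in>X. f x y) = (if x = u then 1 else 0) - (if x = m then 1 else 0))"
      by (rule path_flow[OF wg])
  qed
  then obtain F where F: "\<And>u. u \<in> X \<Longrightarrow> flowok X w (F u)"
    "\<And>u x. u \<in> X \<Longrightarrow> x \<in> X \<Longrightarrow> (\<Sum>y\<in>X. F u x y) = (if x = u then 1 else 0) - (if x = m then 1 else 0)"
    by (metis (no_types, lifting) bchoice)
  define p where "p x y = (\<Sum>u\<in>X. r u * F u x y)" for x y
  have r0: "r u = 0" if "u \<in> M" for u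
  proof (rule ccontr)
    assume "r u \<noteq> 0" then have "u \<in> supp X r" using that MX by (auto simp: supp_def)
    then show False using rs that by auto
  qed
  have rsum: "sum r X = 1" using r by (simp add: prob_dist_def)
  have edge: "p u v = 0" if "u \<in> X" "v \<in> X" "w u v = 0" for u v
    unfolding p_def using F(1) that by (intro sum.neutral) (auto simp: flowok_def)
  have anti: "p u v = - p v u" if "u \<in> X" "v \<in> X" for u v
  proof -
    have a: "F x u v = - F x v u" if "x \<in> X" for x
      using F(1)[OF that] \<open>u \<in> X\<close> \<open>v \<in> X\<close> unfolding flowok_def by blast
    have "p u v = (\<Sum>x\<in>X. - (r x * F x v u))" unfolding p_def
      by (rule sum.cong[OF refl]) (metis a mult_minus_right)
    then show ?thesis unfolding p_def by (simp add: sum_negf)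
  qed
  have div: "(\<Sum>y\<in>X. p x y) = r x - (if x = m then 1 else 0)" if x: "x \<in> X" for x
  proof -
    have "(\<Sum>y\<in>X. p x y) = (\<Sum>u\<in>X. r u * (\<Sum>y\<in>X. F u x y))"
      unfolding p_def sum_distrib_left by (rule sum.swap)
    also have "\<dots> = (\<Sum>u\<in>X. (if u = x then r u else 0) - r u * (if x = m then 1 else 0))"
    proof (rule sum.cong[OF refl])
      fix u assume u: "u \<in> X"
      show "r u * (\<Sum>y\<in>X. F u x y) = (if u = x then r u else 0) - r u * (if x = m then 1 else 0)"
        unfolding F(2)[OF u x] by (cases "u = x") (simp_all add: right_diff_distrib)
    qed
    also have "\<dots> = r x - (\<Sum>u\<in>X. r u) * (if x = m then 1 else 0)"
      using fin x by (simp add: sum_subtractf sum_distrib_right)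
    finally show ?thesis using rsum by simp
  qed
  have "unit_flow X w r M p"
    unfolding unit_flow_def
  proof (intro conjI ballI impI)
    show "\<And>u v. u \<in> X \<Longrightarrow> v \<in> X \<Longrightarrow> w u v = 0 \<Longrightarrow> p u v = 0" using edge by blast
    show "\<And>u v. u \<in> X \<Longrightarrow> v \<in> X \<Longrightarrow> p u v = - p v u" using anti by blast
    fix u assume "u \<in> X - M"
    then show "(\<Sum>v\<in>X. p u v) = r u" using div[of u] m by auto
  next
    have "(\<Sum>u\<in>M. \<Sum>v\<in>X - M. p u v) = (\<Sum>u\<in>M. (\<Sum>v\<in>X. p u v) - (\<Sum>v\<in>M. p u v))"
      using fin MX by (intro sum.cong[OF refl] sum_diff) auto
    also have "\<dots> = (\<Sum>u\<in>M. \<Sum>v\<in>X. p u v) - (\<Sum>u\<in>M. \<Sum>v\<in>M. p u v)"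
      by (simp add: sum_subtractf)
    also have "(\<Sum>u\<in>M. \<Sum>v\<in>M. p u v) = 0"
      using anti MX by (intro antisym_sum_zero) auto
    also have "(\<Sum>u\<in>M. \<Sum>v\<in>X. p u v) = (\<Sum>u\<in>M. - (if u = m then 1 else 0))"
    proof (rule sum.cong[OF refl])
      fix u assume u: "u \<in> M"
      then have "u \<in> X" using MX by auto
      then show "(\<Sum>v\<in>X. p u v) = - (if u = m then 1 else 0)" using div r0[OF u] by simp
    qed
    also have "\<dots> = -1" using m fin MX finite_subset[OF MX fin] by (simp add: sum_negf sum.delta)
    finally show "(\<Sum>u\<in>M. \<Sum>v\<in>X - M. p u v) = -1" by simp
  qed
  then show ?thesis by blast
qed



lemma uf_edge: "unit_flow X w s M p \<Longrightarrow> u \<in> X \<Longrightarrow> v \<in> X \<Longrightarrow> w u v = 0 \<Longrightarrow> p u v = 0"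
  unfolding unit_flow_def by blast
lemma uf_anti: "unit_flow X w s M p \<Longrightarrow> u \<in> X \<Longrightarrow> v \<in> X \<Longrightarrow> p u v = - p v u"
  unfolding unit_flow_def by blast
lemma uf_div: "unit_flow X w s M p \<Longrightarrow> u \<in> X - M \<Longrightarrow> (\<Sum>v\<in>X. p u v) = s u"
  unfolding unit_flow_def by blast
lemma uf_M: "unit_flow X w s M p \<Longrightarrow> (\<Sum>u\<in>M. \<Sum>v\<in>X - M. p u v) = -1"
  unfolding unit_flow_def by blast
lemma uf_intro:
  assumes "\<And>u v. u \<in> X \<Longrightarrow> v \<in> X \<Longrightarrow> w u v = 0 \<Longrightarrow> p u v = 0"
    "\<And>u v. u \<in> X \<Longrightarrow> v \<in> X \<Longrightarrow> p u v = - p v u"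
    "\<And>u. u \<in> X - M \<Longrightarrow> (\<Sum>v\<in>X. p u v) = s u"
    "(\<Sum>u\<in>M. \<Sum>v\<in>X - M. p u v) = -1"
  shows "unit_flow X w s M p"
  unfolding unit_flow_def using assms by blast

definition liftflow :: "('a \<Rightarrow> real) \<Rightarrow> ('a \<Rightarrow> 'a \<Rightarrow> real) \<Rightarrow> (nat \<times> 'a) \<Rightarrow> (nat \<times> 'a) \<Rightarrow> real" where
  "liftflow r p x y = (if fst x = 0 \<and> fst y = 0 then p (snd x) (snd y)
     else if fst x = 1 \<and> fst y = 0 \<and> snd x = snd y then r (snd x)
     else if fst x = 0 \<and> fst y = 1 \<and> snd x = snd y then - r (snd x) else 0)"

lemma liftflow_simps:
  "liftflow r p (0,u) (0,v) = p u v"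
  "liftflow r p (1,u) (0,v) = (if u = v then r u else 0)"
  "liftflow r p (0,u) (1,v) = (if u = v then - r u else 0)"
  "liftflow r p (1,u) (1,v) = 0"
  "liftflow r p (Suc 0,u) (0,v) = (if u = v then r u else 0)"
  "liftflow r p (0,u) (Suc 0,v) = (if u = v then - r u else 0)"
  "liftflow r p (Suc 0,u) (Suc 0,v) = 0"
  unfolding liftflow_def by auto

locale LG =
  fixes X :: "'a set" and w M and \<sigma> :: "'a \<Rightarrow> real" and C :: real
  assumes wg: "weighted_graph X w" and conn: "wg_connected X w"
    and MX: "M \<subseteq> X" and Mne: "M \<noteq> {}" and sigma: "prob_dist X \<sigma>"
    and SM: "supp X \<sigma> \<subseteq> X - M" and Cpos: "C > 0"
begin

abbreviation "W \<equiv> total_weight X w"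
abbreviation "X' \<equiv> lift_vertices X"
abbreviation "w' \<equiv> lift_weight X w \<sigma> C"

lemma fin: "finite X" using wg by (simp add: weighted_graph_def)
lemma w_nonneg: "u \<in> X \<Longrightarrow> v \<in> X \<Longrightarrow> w u v \<ge> 0" using wg by (simp add: weighted_graph_def)
lemma sig_nonneg: "u \<in> X \<Longrightarrow> \<sigma> u \<ge> 0" using sigma by (simp add: prob_dist_def)
lemma sig_sum: "sum \<sigma> X = 1" using sigma by (simp add: prob_dist_def)

lemma W_pos: "W > 0"
proof -
  obtain s where s: "s \<in> X" "\<sigma> s \<noteq> 0"
    using sig_sum by (metis sum.neutral zero_neq_one)
  then have sS: "s \<in> X - M" using SM by (auto simp: supp_def)
  obtain m where m: "m \<in> M" using Mne by auto
  then have mX: "m \<in> X" using MX by auto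
  have path: "(\<lambda>a b. a \<in> X \<and> b \<in> X \<and> w a b > 0)\<^sup>*\<^sup>* s m" using conn s mX by (simp add: wg_connected_def)
  have "s \<noteq> m" using sS m by auto
  then obtain y where y: "y \<in> X" "w s y > 0"
    using path \<open>s \<noteq> m\<close> by (blast elim: converse_rtranclpE)
  have "w s y \<le> (\<Sum>v\<in>X. w s v)"
    using y fin w_nonneg s by (intro member_le_sum) auto
  also have "\<dots> \<le> W" unfolding total_weight_def
    using s fin w_nonneg by (intro member_le_sum[where f = "\<lambda>u. \<Sum>v\<in>X. w u v"]) (auto intro: sum_nonneg)
  finally show ?thesis using y by linarith
qed

lemma wl_simps:
  "w' (0,u) (0,v) = w u v"
  "w' (0,u) (1,v) = (if u = v then \<sigma> u * W / C else 0)"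
  "w' (1,u) (0,v) = (if u = v then \<sigma> u * W / C else 0)"
  "w' (1,u) (1,v) = 0"
  "w' (0,u) (Suc 0,v) = (if u = v then \<sigma> u * W / C else 0)"
  "w' (Suc 0,u) (0,v) = (if u = v then \<sigma> u * W / C else 0)"
  "w' (Suc 0,u) (Suc 0,v) = 0"
  unfolding lift_weight_def by auto

lemma finX': "finite X'" using fin unfolding lift_vertices_def by simp

lemma deg0: "u \<in> X \<Longrightarrow> (\<Sum>y\<in>X'. w' (0,u) y) = (\<Sum>v\<in>X. w u v) + \<sigma> u * W / C"
  by (simp add: sum_lift[OF fin] wl_simps sum.delta fin)

lemma deg1: "u \<in> X \<Longrightarrow> (\<Sum>y\<in>X'. w' (1,u) y) = \<sigma> u * W / C"
  by (simp add: sum_lift[OF fin] wl_simps sum.delta fin)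

lemma W': "total_weight X' w' = W + 2 * W / C"
proof -
  have "total_weight X' w' = (\<Sum>u\<in>X. (\<Sum>v\<in>X. w u v) + \<sigma> u * W / C) + (\<Sum>u\<in>X. \<sigma> u * W / C)"
    unfolding total_weight_def[of X' w'] sum_lift[OF fin, of "\<lambda>x. \<Sum>y\<in>X'. w' x y"]
    by (simp only: deg0 deg1 cong: sum.cong)
  also have "\<dots> = W + 2 * ((\<Sum>u\<in>X. \<sigma> u) * W / C)"
    unfolding sum.distrib total_weight_def by (simp add: sum_distrib_right sum_divide_distrib)
  finally show ?thesis using sig_sum by simp
qed

end


lemma sum_times_single: "(\<Sum>x\<in>{i}\<times>S. f x) = (\<Sum>u\<in>S. f (i,u))"
proof -
  have "{i}\<times>S = Pair i ` S" by auto
  then show ?thesis by (simp add: sum.reindex inj_on_def)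
qed

lemma mem_lift: "(i, u) \<in> lift_vertices X \<longleftrightarrow> (i = 0 \<or> i = 1) \<and> u \<in> X"
  unfolding lift_vertices_def by auto

lemma lift_cases:
  assumes "x \<in> lift_vertices X"
  obtains u where "u \<in> X" "x = (0,u)" | u where "u \<in> X" "x = (1,u)"
  using assms unfolding lift_vertices_def by auto

context LG begin

lemma energy_lift:
  assumes h1: "\<forall>u\<in>X. P (1,u) (0,u) = r u" and h2: "\<forall>u\<in>X. P (0,u) (1,u) = - r u"
  shows "flow_energy X' w' P = flow_energy X w (\<lambda>u v. P (0,u) (0,v)) + (\<Sum>u\<in>X. (r u)^2 / (\<sigma> u * W / C))"
proof -
  have a: "(\<Sum>y\<in>X'. (P (0,u) y)^2 / w' (0,u) y) = (\<Sum>v\<in>X. (P (0,u) (0,v))^2 / w u v) + (r u)^2/(\<sigma> u * W / C)"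
    if u: "u \<in> X" for u
  proof -
    have "(\<Sum>v\<in>X. (P (0,u) (1,v))^2 / w' (0,u) (1,v)) = (P (0,u) (1,u))^2 / w' (0,u) (1,u)"
      by (rule sum_single[OF fin u]) (simp add: wl_simps)
    also have "\<dots> = (r u)^2/(\<sigma> u * W / C)" using h2 u by (simp add: wl_simps)
    finally show ?thesis unfolding sum_lift[OF fin] by (simp add: wl_simps)
  qed
  have b: "(\<Sum>y\<in>X'. (P (1,u) y)^2 / w' (1,u) y) = (r u)^2/(\<sigma> u * W / C)"
    if u: "u \<in> X" for u
  proof -
    have "(\<Sum>v\<in>X. (P (1,u) (0,v))^2 / w' (1,u) (0,v)) = (P (1,u) (0,u))^2 / w' (1,u) (0,u)"
      by (rule sum_single[OF fin u]) (simp add: wl_simps)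
    also have "\<dots> = (r u)^2/(\<sigma> u * W / C)" using h1 u by (simp add: wl_simps)
    finally show ?thesis unfolding sum_lift[OF fin] by (simp add: wl_simps)
  qed
  have "(\<Sum>x\<in>X'. \<Sum>y\<in>X'. (P x y)^2 / w' x y)
      = (\<Sum>u\<in>X. (\<Sum>v\<in>X. (P (0,u) (0,v))^2 / w u v) + (r u)^2/(\<sigma> u * W / C)) + (\<Sum>u\<in>X. (r u)^2/(\<sigma> u * W / C))"
    unfolding sum_lift[OF fin, of "\<lambda>x. \<Sum>y\<in>X'. (P x y)^2 / w' x y"]
    using a b by simp
  also have "\<dots> = (\<Sum>u\<in>X. \<Sum>v\<in>X. (P (0,u) (0,v))^2 / w u v) + 2 * (\<Sum>u\<in>X. (r u)^2/(\<sigma> u * W / C))"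
    by (simp add: sum.distrib)
  finally show ?thesis unfolding flow_energy_def by simp
qed

lemma r_zero:
  assumes r: "prob_dist X r" "supp X r \<subseteq> supp X \<sigma>"
  shows "u \<in> X \<Longrightarrow> \<sigma> u = 0 \<Longrightarrow> r u = 0" and "u \<in> M \<Longrightarrow> r u = 0"
proof -
  show "u \<in> X \<Longrightarrow> \<sigma> u = 0 \<Longrightarrow> r u = 0" using r(2) by (auto simp: supp_def)
  show "u \<in> M \<Longrightarrow> r u = 0" using r(2) SM MX by (auto simp: supp_def)
qed

lemma lift_uf:
  assumes r: "prob_dist X r" "supp X r \<subseteq> supp X \<sigma>" and p: "unit_flow X w r M p"
  shows "unit_flow X' w' (lift_dist r) ({0}\<times>M) (liftflow r p)"
proof (rule uf_intro)
  have Wc: "W / C > 0" using W_pos Cpos by simp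
  fix x y assume x: "x \<in> X'" and y: "y \<in> X'"
  {
    assume e: "w' x y = 0"
    show "liftflow r p x y = 0"
    proof (cases rule: lift_cases[OF x]; cases rule: lift_cases[OF y])
      fix u v assume "u \<in> X" "x = (0,u)" "v \<in> X" "y = (0,v)"
      then show ?thesis using e uf_edge[OF p] by (simp add: wl_simps liftflow_simps)
    next
      fix u v assume uv: "u \<in> X" "x = (0,u)" "v \<in> X" "y = (1,v)"
      show ?thesis
      proof (cases "u = v")
        case True
        then have "\<sigma> u * W / C = 0" using e uv by (simp add: wl_simps)
        then have "\<sigma> u = 0" using W_pos Cpos by (metis divide_eq_0_iff less_irrefl mult_eq_0_iff)
        then show ?thesis using True uv r_zero[OF r] by (simp add: liftflow_simps)
      qed (use uv in \<open>simp add: liftflow_simps\<close>)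
    next
      fix u v assume uv: "u \<in> X" "x = (1,u)" "v \<in> X" "y = (0,v)"
      show ?thesis
      proof (cases "u = v")
        case True
        then have "\<sigma> u * W / C = 0" using e uv by (simp add: wl_simps)
        then have "\<sigma> u = 0" using W_pos Cpos by (metis divide_eq_0_iff less_irrefl mult_eq_0_iff)
        then show ?thesis using True uv r_zero[OF r] by (simp add: liftflow_simps)
      qed (use uv in \<open>simp add: liftflow_simps\<close>)
    next
      fix u v assume uv: "u \<in> X" "x = (1,u)" "v \<in> X" "y = (1,v)"
      then show ?thesis by (simp add: liftflow_simps)
    qed
  }
  show "liftflow r p x y = - liftflow r p y x"
  proof (cases rule: lift_cases[OF x]; cases rule: lift_cases[OF y])
    fix u v assume "u \<in> X" "x = (0,u)" "v \<in> X" "y = (0,v)"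
    then show ?thesis using uf_anti[OF p, of u v] by (simp add: liftflow_simps)
  next
    fix u v assume uv: "u \<in> X" "x = (0,u)" "v \<in> X" "y = (1,v)"
    then show ?thesis by (cases "u = v") (simp_all add: liftflow_simps)
  next
    fix u v assume uv: "u \<in> X" "x = (1,u)" "v \<in> X" "y = (0,v)"
    then show ?thesis by (cases "u = v") (simp_all add: liftflow_simps)
  next
    fix u v assume uv: "u \<in> X" "x = (1,u)" "v \<in> X" "y = (1,v)"
    then show ?thesis by (simp add: liftflow_simps)
  qed
next
  fix x assume x: "x \<in> X' - {0}\<times>M"
  then have x': "x \<in> X'" by auto
  show "(\<Sum>y\<in>X'. liftflow r p x y) = lift_dist r x"
  proof (cases rule: lift_cases[OF x'])
    fix u assume u: "u \<in> X" "x = (0,u)"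
    then have uM: "u \<in> X - M" using x by auto
    have "(\<Sum>y\<in>X'. liftflow r p x y) = (\<Sum>v\<in>X. p u v) + (\<Sum>v\<in>X. if u = v then - r u else 0)"
      unfolding sum_lift[OF fin] u(2) by (simp add: liftflow_simps)
    also have "\<dots> = 0" using uf_div[OF p uM] u fin by simp
    finally show ?thesis using u by (simp add: lift_dist_def)
  next
    fix u assume u: "u \<in> X" "x = (1,u)"
    have "(\<Sum>y\<in>X'. liftflow r p x y) = (\<Sum>v\<in>X. if u = v then r u else 0)"
      unfolding sum_lift[OF fin] u(2) by (simp add: liftflow_simps)
    also have "\<dots> = r u" using u fin by simp
    finally show ?thesis using u by (simp add: lift_dist_def)
  qed
next
  have "(\<Sum>x\<in>{0}\<times>M. \<Sum>y\<in>X' - {0}\<times>M. liftflow r p x y)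
      = (\<Sum>u\<in>M. (\<Sum>v\<in>X - M. p u v) + (\<Sum>v\<in>X. if u = v then - r u else 0))"
    unfolding sum_times_single sum_lift_minus[OF fin MX] by (simp add: liftflow_simps)
  also have "\<dots> = (\<Sum>u\<in>M. (\<Sum>v\<in>X - M. p u v))"
  proof (rule sum.cong[OF refl])
    fix u assume u: "u \<in> M"
    then have "u \<in> X" using MX by auto
    then show "(\<Sum>v\<in>X - M. p u v) + (\<Sum>v\<in>X. if u = v then - r u else 0) = (\<Sum>v\<in>X - M. p u v)"
      using r_zero(2)[OF r u] fin by simp
  qed
  also have "\<dots> = -1" by (rule uf_M[OF p])
  finally show "(\<Sum>x\<in>{0}\<times>M. \<Sum>y\<in>X' - {0}\<times>M. liftflow r p x y) = -1" .
qed

end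


context LG begin

lemma restrict_uf:
  assumes r: "prob_dist X r" "supp X r \<subseteq> supp X \<sigma>" and P: "unit_flow X' w' (lift_dist r) ({0}\<times>M) P"
  shows "unit_flow X w r M (\<lambda>u v. P (0,u) (0,v))" and "\<forall>u\<in>X. P (1,u) (0,u) = r u"
    and "\<forall>u\<in>X. P (0,u) (1,u) = - r u"
proof -
  have mem0: "(0,u) \<in> X'" if "u \<in> X" for u using that by (simp add: mem_lift)
  have mem1: "(1,u) \<in> X'" if "u \<in> X" for u using that by (simp add: mem_lift)
  have P11: "P (1,u) (1,v) = 0" if "u \<in> X" "v \<in> X" for u v
    using uf_edge[OF P mem1[OF that(1)] mem1[OF that(2)]] by (simp add: wl_simps)
  have P10: "P (1,u) (0,v) = 0" if "u \<in> X" "v \<in> X" "u \<noteq> v" for u v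
    using uf_edge[OF P mem1[OF that(1)] mem0[OF that(2)]] that(3) by (simp add: wl_simps)
  have P01: "P (0,u) (1,v) = 0" if "u \<in> X" "v \<in> X" "u \<noteq> v" for u v
    using uf_edge[OF P mem0[OF that(1)] mem1[OF that(2)]] that(3) by (simp add: wl_simps)
  have c1: "P (1,u) (0,u) = r u" if u: "u \<in> X" for u
  proof -
    have d: "(1,u) \<in> X' - {0}\<times>M" using u by (simp add: mem_lift)
    have "(\<Sum>y\<in>X'. P (1,u) y) = (\<Sum>v\<in>X. P (1,u) (0,v)) + (\<Sum>v\<in>X. P (1,u) (1,v))"
      by (rule sum_lift[OF fin])
    also have "(\<Sum>v\<in>X. P (1,u) (0,v)) = P (1,u) (0,u)"
      using P10 u by (intro sum_single[OF fin u]) auto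
    also have "(\<Sum>v\<in>X. P (1,u) (1,v)) = 0"
      using P11 u by (intro sum.neutral) auto
    finally show ?thesis using uf_div[OF P d] by (simp add: lift_dist_def)
  qed
  have c2: "P (0,u) (1,u) = - r u" if u: "u \<in> X" for u
    using uf_anti[OF P mem0[OF u] mem1[OF u]] c1[OF u] by simp
  have row0: "(\<Sum>y\<in>X'. P (0,u) y) = (\<Sum>v\<in>X. P (0,u) (0,v)) - r u" if u: "u \<in> X" for u
  proof -
    have "(\<Sum>y\<in>X'. P (0,u) y) = (\<Sum>v\<in>X. P (0,u) (0,v)) + (\<Sum>v\<in>X. P (0,u) (1,v))"
      by (rule sum_lift[OF fin])
    also have "(\<Sum>v\<in>X. P (0,u) (1,v)) = P (0,u) (1,u)"
      using P01 u by (intro sum_single[OF fin u]) auto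
    finally show ?thesis using c2[OF u] by simp
  qed
  show "\<forall>u\<in>X. P (1,u) (0,u) = r u" using c1 by blast
  show "\<forall>u\<in>X. P (0,u) (1,u) = - r u" using c2 by blast
  show "unit_flow X w r M (\<lambda>u v. P (0,u) (0,v))"
  proof (rule uf_intro)
    fix u v assume uv: "u \<in> X" "v \<in> X"
    show "w u v = 0 \<Longrightarrow> P (0,u) (0,v) = 0"
      using uf_edge[OF P mem0[OF uv(1)] mem0[OF uv(2)]] by (simp add: wl_simps)
    show "P (0,u) (0,v) = - P (0,v) (0,u)" by (rule uf_anti[OF P mem0[OF uv(1)] mem0[OF uv(2)]])
  next
    fix u assume u: "u \<in> X - M"
    have d: "(0,u) \<in> X' - {0}\<times>M" using u by (simp add: mem_lift)
    show "(\<Sum>v\<in>X. P (0,u) (0,v)) = r u"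
      using uf_div[OF P d] row0[of u] u by (simp add: lift_dist_def)
  next
    have "-1 = (\<Sum>x\<in>{0}\<times>M. \<Sum>y\<in>X' - {0}\<times>M. P x y)" using uf_M[OF P] by simp
    also have "\<dots> = (\<Sum>u\<in>M. (\<Sum>v\<in>X - M. P (0,u) (0,v)) + (\<Sum>v\<in>X. P (0,u) (1,v)))"
      unfolding sum_times_single sum_lift_minus[OF fin MX] ..
    also have "\<dots> = (\<Sum>u\<in>M. (\<Sum>v\<in>X - M. P (0,u) (0,v)))"
    proof (rule sum.cong[OF refl])
      fix u assume u: "u \<in> M"
      then have uX: "u \<in> X" using MX by auto
      have "(\<Sum>v\<in>X. P (0,u) (1,v)) = P (0,u) (1,u)"
        using P01 uX by (intro sum_single[OF fin uX]) auto
      also have "\<dots> = 0" using c2[OF uX] r_zero(2)[OF r u] by simp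
      finally show "(\<Sum>v\<in>X - M. P (0,u) (0,v)) + (\<Sum>v\<in>X. P (0,u) (1,v)) = (\<Sum>v\<in>X - M. P (0,u) (0,v))"
        by simp
    qed
    finally show "(\<Sum>u\<in>M. \<Sum>v\<in>X - M. P (0,u) (0,v)) = -1" by simp
  qed
qed

end


lemma final_ineq:
  fixes a p t :: real
  assumes a: "a \<ge> 0" and p: "p > 0" and t1: "1 \<le> t" and t2: "t \<le> a + 1 / p"
  shows "1 / 2 * min p (1 / a) \<le> 1 / t"
proof (cases "a = 0")
  case True
  then show ?thesis using p t1 by simp
next
  case False
  then have a': "a > 0" using a by simp
  have tpos: "t > 0" using t1 by simp
  show ?thesis
  proof (cases "a \<ge> 1 / p")
    case True
    then have "t \<le> 2 * a" using t2 by simp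
    then have "1 / (2 * a) \<le> 1 / t" using tpos by (intro divide_left_mono) auto
    moreover have "1 / 2 * min p (1 / a) \<le> 1 / (2 * a)" by (simp add: min_le_iff_disj)
    ultimately show ?thesis by linarith
  next
    case False
    then have "t \<le> 2 * (1 / p)" using t2 by simp
    then have "1 / (2 * (1/p)) \<le> 1 / t" using tpos p by (intro divide_left_mono) auto
    moreover have "1 / (2 * (1/p)) = 1/2 * p" by simp
    moreover have "1 / 2 * min p (1 / a) \<le> 1/2 * p" by simp
    ultimately show ?thesis by linarith
  qed
qed

context LG begin

definition K :: "('a \<Rightarrow> real) \<Rightarrow> real" where
  "K r = (\<Sum>u\<in>X. (r u)^2 / (\<sigma> u * W / C))"

lemma K_eq: "K r = C / W * (\<Sum>u\<in>X. (r u)^2 / \<sigma> u)"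
  unfolding K_def sum_distrib_left
  by (rule sum.cong[OF refl]) (simp add: divide_divide_eq_right times_divide_times_eq mult.commute mult.left_commute)

lemma energy_nonneg: "flow_energy X w p \<ge> 0"
  unfolding flow_energy_def using w_nonneg
  by (intro divide_nonneg_nonneg sum_nonneg) auto

lemma energy_set:
  assumes r: "prob_dist X r" "supp X r \<subseteq> supp X \<sigma>"
  shows "{flow_energy X' w' P | P. unit_flow X' w' (lift_dist r) ({0}\<times>M) P}
       = (\<lambda>e. e + K r) ` {flow_energy X w p | p. unit_flow X w r M p}"
proof (intro equalityI subsetI)
  fix e assume "e \<in> {flow_energy X' w' P | P. unit_flow X' w' (lift_dist r) ({0}\<times>M) P}"
  then obtain P where P: "unit_flow X' w' (lift_dist r) ({0}\<times>M) P" "e = flow_energy X' w' P" by blast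
  have "e = flow_energy X w (\<lambda>u v. P (0,u) (0,v)) + K r"
    unfolding P(2) K_def by (rule energy_lift[OF restrict_uf(2,3)[OF r P(1)]])
  then show "e \<in> (\<lambda>e. e + K r) ` {flow_energy X w p | p. unit_flow X w r M p}"
    using restrict_uf(1)[OF r P(1)] P(2) by blast
next
  fix e assume "e \<in> (\<lambda>e. e + K r) ` {flow_energy X w p | p. unit_flow X w r M p}"
  then obtain p where p: "unit_flow X w r M p" "e = flow_energy X w p + K r" by blast
  have h1: "\<forall>u\<in>X. liftflow r p (1,u) (0,u) = r u" by (simp add: liftflow_simps)
  have h2: "\<forall>u\<in>X. liftflow r p (0,u) (1,u) = - r u" by (simp add: liftflow_simps)
  have q: "(\<lambda>u v. liftflow r p (0,u) (0,v)) = p" by (simp add: liftflow_simps)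
  have "flow_energy X' w' (liftflow r p) = e"
    using energy_lift[OF h1 h2] unfolding q p(2) K_def .
  then show "e \<in> {flow_energy X' w' P | P. unit_flow X' w' (lift_dist r) ({0}\<times>M) P}"
    using lift_uf[OF r p(1)] by blast
qed

lemma eff_res_props:
  assumes r: "prob_dist X r" "supp X r \<subseteq> supp X \<sigma>"
  shows "eff_res X w r M \<ge> 0"
    and "eff_res X' w' (lift_dist r) ({0}\<times>M) = eff_res X w r M + K r"
proof -
  obtain m where m: "m \<in> M" using Mne by auto
  have rs: "supp X r \<subseteq> X - M" using r(2) SM by auto
  obtain p0 where p0: "unit_flow X w r M p0" using flow_exists[OF wg conn MX m r(1) rs] by blast
  define A where "A = {flow_energy X w p | p. unit_flow X w r M p}"
  have Ane: "A \<noteq> {}" using p0 unfolding A_def by blast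
  have Abdd: "bdd_below A" unfolding A_def bdd_below_def using energy_nonneg by blast
  have "Inf A \<ge> 0" by (rule cInf_greatest[OF Ane]) (auto simp: A_def energy_nonneg)
  then show "eff_res X w r M \<ge> 0" unfolding eff_res_def A_def .
  have "eff_res X' w' (lift_dist r) ({0}\<times>M) = Inf ((\<lambda>e. e + K r) ` A)"
    unfolding eff_res_def energy_set[OF r] A_def ..
  also have "\<dots> = Inf ((\<lambda>e. K r + id e) ` A)" by (simp add: add.commute)
  also have "\<dots> = K r + Inf (id ` A)"
    using Ane Abdd by (intro Inf_add_eq) auto
  finally show "eff_res X' w' (lift_dist r) ({0}\<times>M) = eff_res X w r M + K r"
    unfolding eff_res_def A_def by simp
qed

lemma Q_ge:
  assumes r: "prob_dist X r" "supp X r \<subseteq> supp X \<sigma>"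
  shows "(\<Sum>u\<in>X. (r u)^2 / \<sigma> u) \<ge> 1"
proof -
  have "(\<Sum>u\<in>X. 2 * r u - \<sigma> u) \<le> (\<Sum>u\<in>X. (r u)^2 / \<sigma> u)"
  proof (rule sum_mono)
    fix u assume u: "u \<in> X"
    show "2 * r u - \<sigma> u \<le> (r u)^2 / \<sigma> u"
    proof (cases "\<sigma> u = 0")
      case True
      then show ?thesis using r_zero(1)[OF r u] by simp
    next
      case False
      then have s: "\<sigma> u > 0" using sig_nonneg[OF u] by simp
      have "(r u)^2 - (2 * r u - \<sigma> u) * \<sigma> u = (r u - \<sigma> u)^2" by (simp add: power2_eq_square algebra_simps)
      then have "(2 * r u - \<sigma> u) * \<sigma> u \<le> (r u)^2" using zero_le_power2[of "r u - \<sigma> u"] by linarith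
      then show ?thesis using s by (simp add: pos_le_divide_eq)
    qed
  qed
  moreover have "(\<Sum>u\<in>X. 2 * r u - \<sigma> u) = 1"
    using r(1) sig_sum by (simp add: sum_subtractf sum_distrib_left[symmetric] prob_dist_def)
  ultimately show ?thesis by simp
qed

end


context LG begin

lemma dist_from_lift:
  assumes s: "prob_dist X' s" "supp X' s \<subseteq> {1}\<times>supp X \<sigma>"
  shows "\<exists>r. prob_dist X r \<and> supp X r \<subseteq> supp X \<sigma> \<and> s = lift_dist r"
proof (intro exI conjI)
  define r where "r u = s (1,u)" for u
  have s0: "s (0,u) = 0" for u
  proof (cases "(0::nat,u) \<in> X'")
    case True
    then show ?thesis using s(2) by (auto simp: supp_def)
  next
    case False
    then show ?thesis using s(1) by (simp add: prob_dist_def)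
  qed
  show "prob_dist X r" unfolding prob_dist_def
  proof (intro conjI ballI allI impI)
    show "\<And>u. u \<in> X \<Longrightarrow> 0 \<le> r u" using s(1) by (simp add: prob_dist_def r_def mem_lift)
    show "\<And>u. u \<notin> X \<Longrightarrow> r u = 0" using s(1) by (simp add: prob_dist_def r_def mem_lift)
    have "sum s X' = 1" using s(1) by (simp add: prob_dist_def)
    then show "sum r X = 1" unfolding sum_lift[OF fin] r_def s0 by simp
  qed
  show "supp X r \<subseteq> supp X \<sigma>"
  proof
    fix u assume "u \<in> supp X r"
    then have "(1,u) \<in> supp X' s" by (auto simp: supp_def r_def mem_lift)
    then show "u \<in> supp X \<sigma>" using s(2) by auto
  qed
  show "s = lift_dist r"
  proof
    fix x :: "nat \<times> 'a"
    obtain i u where x: "x = (i,u)" by (cases x)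
    show "s x = lift_dist r x"
    proof (cases "i = 1")
      case True then show ?thesis using x by (simp add: lift_dist_def r_def)
    next
      case False
      have "s (i,u) = 0"
      proof (cases "(i,u) \<in> X'")
        case True
        then show ?thesis using s(2) False by (auto simp: supp_def)
      next
        case F: False
        then show ?thesis using s(1) by (simp add: prob_dist_def)
      qed
      then show ?thesis using x False by (simp add: lift_dist_def)
    qed
  qed
qed

lemma lift_dist_prob:
  assumes r: "prob_dist X r" "supp X r \<subseteq> supp X \<sigma>"
  shows "prob_dist X' (lift_dist r)" "supp X' (lift_dist r) \<subseteq> {1}\<times>supp X \<sigma>"
proof -
  show "prob_dist X' (lift_dist r)" unfolding prob_dist_def
  proof (intro conjI ballI allI impI)
    fix x assume "x \<in> X'"
    then show "0 \<le> lift_dist r x" using r(1)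
      by (cases rule: lift_cases) (auto simp: lift_dist_def prob_dist_def)
  next
    fix x assume x: "x \<notin> X'"
    obtain i u where xi: "x = (i,u)" by (cases x)
    show "lift_dist r x = 0"
    proof (cases "i = 1")
      case True
      then have "u \<notin> X" using x xi by (simp add: mem_lift)
      then show ?thesis using r(1) xi True by (simp add: lift_dist_def prob_dist_def)
    qed (use xi in \<open>simp add: lift_dist_def\<close>)
  next
    show "sum (lift_dist r) X' = 1" using r(1)
      unfolding sum_lift[OF fin] by (simp add: lift_dist_def prob_dist_def)
  qed
  show "supp X' (lift_dist r) \<subseteq> {1}\<times>supp X \<sigma>"
  proof
    fix x assume x: "x \<in> supp X' (lift_dist r)"
    then have xX: "x \<in> X'" and nz: "lift_dist r x \<noteq> 0" by (auto simp: supp_def)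
    from xX show "x \<in> {1}\<times>supp X \<sigma>"
    proof (cases rule: lift_cases)
      case (1 u) then show ?thesis using nz by (simp add: lift_dist_def)
    next
      case (2 u)
      then have "u \<in> supp X r" using nz by (simp add: lift_dist_def supp_def)
      then show ?thesis using 2 r(2) by auto
    qed
  qed
qed

end

theorem mainTheorem7:
  fixes X :: "'a set" and w :: "'a \<Rightarrow> 'a \<Rightarrow> real" and M S :: "'a set"
    and \<sigma> :: "'a \<Rightarrow> real" and C :: real
  assumes wg: "weighted_graph X w"
    and conn: "wg_connected X w"
    and M: "M \<subseteq> X" "M \<noteq> {}"
    and sigma: "prob_dist X \<sigma>"
    and S: "S = supp X \<sigma>" "S \<subseteq> X - M"
    and C: "C > 0"
  shows "stat_meas (lift_vertices X) (lift_weight X w \<sigma> C) ({1} \<times> S) = 1 / (C + 2)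
    \<and> (\<forall>\<rho> p. prob_dist X \<rho> \<and> supp X \<rho> \<subseteq> S \<and> (\<Sum>u\<in>S. (\<rho> u)\<^sup>2 / \<sigma> u) = 1 / p \<longrightarrow>
         commute_time (lift_vertices X) (lift_weight X w \<sigma> C) (lift_dist \<rho>) ({0} \<times> M)
           = (commute_time X w \<rho> M / C + 1 / p) * (C + 2)
       \<and> 1 / (commute_time_set (lift_vertices X) (lift_weight X w \<sigma> C) ({1} \<times> S) ({0} \<times> M)
              * stat_meas (lift_vertices X) (lift_weight X w \<sigma> C) ({1} \<times> S))
           \<ge> 1 / 2 * min p (C / commute_time X w \<rho> M))"
proof -
  interpret LG X w M \<sigma> C
    using wg conn M sigma S C by unfold_locales auto
  have Wp: "W > 0" by (rule W_pos)
  have SX: "S \<subseteq> X" using S by auto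
  have sumS: "sum \<sigma> S = 1"
  proof -
    have "sum \<sigma> S = sum \<sigma> X"
      using fin SX S(1) by (intro sum.mono_neutral_left) (auto simp: supp_def)
    then show ?thesis using sig_sum by simp
  qed
  have W'eq: "total_weight X' w' = W * (C + 2) / C" using W' Cpos by (simp add: field_simps)
  have pi: "stat_meas X' w' ({1} \<times> S) = 1 / (C + 2)"
  proof -
    have cw: "C * W + W * 2 \<noteq> 0" using Wp Cpos by (smt (verit) mult_pos_pos)
    have "stat_meas X' w' ({1} \<times> S) = (\<Sum>u\<in>S. \<sigma> u * W / C / total_weight X' w')"
      unfolding stat_meas_def sum_times_single
    proof (rule sum.cong[OF refl])
      fix u assume "u \<in> S"
      then have uX: "u \<in> X" using SX by auto
      show "stat_dist X' w' (1,u) = \<sigma> u * W / C / total_weight X' w'"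
        unfolding stat_dist_def vdeg_def deg1[OF uX] ..
    qed
    also have "\<dots> = (\<Sum>u\<in>S. \<sigma> u * (W / C / total_weight X' w'))"
      by (rule sum.cong[OF refl]) (simp add: times_divide_eq_right)
    also have "\<dots> = (\<Sum>u\<in>S. \<sigma> u) * (W / C / total_weight X' w')"
      by (rule sum_distrib_right[symmetric])
    also have "\<dots> = 1 / (C + 2)" unfolding sumS W'eq using Wp Cpos cw by (simp add: field_simps)
    finally show ?thesis .
  qed
  show ?thesis
  proof (intro conjI allI impI)
    show "stat_meas X' w' ({1} \<times> S) = 1 / (C + 2)" by (rule pi)
  next
    fix \<rho> p assume h: "prob_dist X \<rho> \<and> supp X \<rho> \<subseteq> S \<and> (\<Sum>u\<in>S. (\<rho> u)\<^sup>2 / \<sigma> u) = 1 / p"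
    have r: "prob_dist X \<rho>" "supp X \<rho> \<subseteq> supp X \<sigma>" using h S by auto
    have Qeq: "(\<Sum>u\<in>X. (\<rho> u)^2 / \<sigma> u) = 1 / p"
    proof -
      have "(\<Sum>u\<in>S. (\<rho> u)^2 / \<sigma> u) = (\<Sum>u\<in>X. (\<rho> u)^2 / \<sigma> u)"
        using fin SX S(1) by (intro sum.mono_neutral_left) (auto simp: supp_def)
      then show ?thesis using h by simp
    qed
    have Q1: "1 / p \<ge> 1" using Q_ge[OF r] Qeq by simp
    then have pp: "p > 0" by (cases "p > 0") (auto simp: not_less divide_nonpos_neg le_less)
    define R where "R = eff_res X w \<rho> M"
    have R0: "R \<ge> 0" unfolding R_def by (rule eff_res_props(1)[OF r])
    have eff': "eff_res X' w' (lift_dist \<rho>) ({0}\<times>M) = R + C / W * (1 / p)"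
      unfolding R_def eff_res_props(2)[OF r] K_eq Qeq ..
    have ct: "commute_time X w \<rho> M = W * R" unfolding commute_time_def R_def ..
    show "commute_time X' w' (lift_dist \<rho>) ({0} \<times> M) = (commute_time X w \<rho> M / C + 1 / p) * (C + 2)"
      unfolding commute_time_def[of X' w'] eff' W'eq ct
      using Wp Cpos pp by (simp add: field_simps)
    define F where "F = {eff_res X' w' s ({0}\<times>M) | s. prob_dist X' s \<and> supp X' s \<subseteq> {1}\<times>S}"
    have Fge: "f \<ge> C / W" if fF: "f \<in> F" for f
    proof -
      obtain s where s: "f = eff_res X' w' s ({0}\<times>M)" "prob_dist X' s" "supp X' s \<subseteq> {1}\<times>supp X \<sigma>"
        using fF S(1) unfolding F_def by blast
      obtain r' where r': "prob_dist X r'" "supp X r' \<subseteq> supp X \<sigma>" "s = lift_dist r'"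
        using dist_from_lift[OF s(2,3)] by blast
      have "f = eff_res X w r' M + C / W * (\<Sum>u\<in>X. (r' u)^2 / \<sigma> u)"
        unfolding s(1) r'(3) eff_res_props(2)[OF r'(1,2)] K_eq ..
      moreover have "eff_res X w r' M \<ge> 0" by (rule eff_res_props(1)[OF r'(1,2)])
      moreover have "C / W * (\<Sum>u\<in>X. (r' u)^2 / \<sigma> u) \<ge> C / W * 1"
        using Q_ge[OF r'(1,2)] Wp Cpos by (intro mult_left_mono) auto
      ultimately show ?thesis by simp
    qed
    have inF: "eff_res X' w' (lift_dist \<rho>) ({0}\<times>M) \<in> F"
      unfolding F_def using lift_dist_prob[OF r] S(1) by blast
    have Fne: "F \<noteq> {}" using inF by blast
    have Fbdd: "bdd_below F" using Fge unfolding bdd_below_def by blast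
    define I where "I = Inf F"
    have I1: "I \<ge> C / W" unfolding I_def using Fne Fge by (intro cInf_greatest) auto
    have I2: "I \<le> R + C / W * (1 / p)" unfolding I_def eff'[symmetric] by (rule cInf_lower[OF inF Fbdd])
    have cts: "commute_time_set X' w' ({1} \<times> S) ({0} \<times> M) = W * (C + 2) / C * I"
      unfolding commute_time_set_def eff_res_set_def W'eq I_def F_def ..
    define t where "t = W * I / C"
    have prod: "commute_time_set X' w' ({1} \<times> S) ({0} \<times> M) * stat_meas X' w' ({1} \<times> S) = t"
    proof -
      have c2: "C + 2 \<noteq> 0" "C * C + C * 2 \<noteq> 0" using Cpos by (simp, smt (verit) mult_pos_pos)
      show ?thesis unfolding cts pi t_def using Cpos c2 by (simp add: field_simps)
    qed
    have t1: "1 \<le> t"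
    proof -
      have "W * (C / W) / C \<le> W * I / C" using I1 Wp Cpos by (intro divide_right_mono mult_left_mono) auto
      then show ?thesis unfolding t_def using Wp Cpos by simp
    qed
    have t2: "t \<le> W * R / C + 1 / p"
    proof -
      have "W * I / C \<le> W * (R + C / W * (1 / p)) / C" using I2 Wp Cpos by (intro divide_right_mono mult_left_mono) auto
      also have "\<dots> = W * R / C + 1 / p" using Wp Cpos by (simp add: field_simps)
      finally show ?thesis unfolding t_def .
    qed
    have "1 / 2 * min p (1 / (W * R / C)) \<le> 1 / t"
      by (rule final_ineq[OF _ pp t1 t2]) (use R0 Wp Cpos in simp)
    moreover have "1 / (W * R / C) = C / commute_time X w \<rho> M" unfolding ct by simp
    ultimately show "1 / (commute_time_set X' w' ({1} \<times> S) ({0} \<times> M) * stat_meas X' w' ({1} \<times> S))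
           \<ge> 1 / 2 * min p (C / commute_time X w \<rho> M)" unfolding prod ct by simp
  qed
qed


end
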